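(* Let $\delta,\gamma\in(0,1)$, $b,d\in\mathbb N$ with $d\ge1$, and $n=b^{d-1}$. For $S\in\mathbb N$ let $\tilde S\sim\mathrm{Bin}(S,\gamma^{d-1})$ and, conditionally on $\tilde S$, let $X_1,\dots,X_{\tilde S}$ be i.i.d. uniform on $\{1,\dots,n\}$; set $mU=\min_{1\le i\le n}\sum_{s=1}^{\tilde S}\mathbb I(X_s=i)$. Define $t(T,d)=\min\{S\in\mathbb N:\ \Pr[mU\ge T]\ge1-\delta\}$. If $T\in\mathbb N$ satisfies $T\ge4\log\delta^{-1}+4\log2$, then \[t(T,d)\le16\left(\frac1\gamma\right)^{d-1}\log\left(2b^{d-1}\right)\cdot b^{d-1}T.\]
   Context: This quantifies how many iterations an algorithm exploring uniformly with probability $\gamma$ at every node of a tree with branching factor $b$ needs so that, with probability at least $1-\delta$, each of the $b^{d-1}$ nodes at depth $d$ (root at depth 1) is visited at least $T$ times; $\log$ is the natural logarithm. *)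

theory Defs
  imports "HOL-Probability.Probability"
begin

definition mU_pmf :: "real \<Rightarrow> nat \<Rightarrow> nat \<Rightarrow> nat \<Rightarrow> nat pmf" where
  "mU_pmf \<gamma> b d S =
     do { k \<leftarrow> binomial_pmf S (\<gamma> ^ (d - 1));
          xs \<leftarrow> replicate_pmf k (pmf_of_set {1..b ^ (d - 1)});
          return_pmf (Min ((\<lambda>i. count_list xs i) ` {1..b ^ (d - 1)})) }"

definition prob_mU_ge :: "real \<Rightarrow> nat \<Rightarrow> nat \<Rightarrow> nat \<Rightarrow> nat \<Rightarrow> real" where
  "prob_mU_ge \<gamma> b d T S = measure_pmf.prob (mU_pmf \<gamma> b d S) {m. T \<le> m}"

definition t_iter :: "real \<Rightarrow> real \<Rightarrow> nat \<Rightarrow> nat \<Rightarrow> nat \<Rightarrow> nat" where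
  "t_iter \<delta> \<gamma> b d T = (LEAST S. prob_mU_ge \<gamma> b d T S \<ge> 1 - \<delta>)"

end

theory Submission
  imports Defs "HOL-Analysis.Harmonic_Numbers"
begin

lemma rep_count:
  assumes "finite A" "A \<noteq> {}" "i \<in> A" "0 \<le> a"
  shows "(\<integral>\<^sup>+xs. ennreal (a ^ count_list xs i) \<partial>measure_pmf (replicate_pmf k (pmf_of_set A)))
     = ennreal (((real (card A) - 1 + a) / card A) ^ k)"
proof (induction k)
  case 0
  then show ?case by simp
next
  case (Suc k)
  have c: "card A \<ge> 1" using assms by (simp add: Suc_leI card_gt_0_iff)
  have "(\<integral>\<^sup>+xs. ennreal (a ^ count_list xs i) \<partial>measure_pmf (replicate_pmf (Suc k) (pmf_of_set A)))
     = (\<integral>\<^sup>+x. \<integral>\<^sup>+xs. ennreal ((if x = i then a else 1) * a ^ count_list xs i) \<partial>measure_pmf (replicate_pmf k (pmf_of_set A)) \<partial>measure_pmf (pmf_of_set A))"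
    by (simp add: power_add; intro nn_integral_cong; simp)
  also have "\<dots> = (\<integral>\<^sup>+x. ennreal (if x = i then a else 1) * ennreal (((real (card A) - 1 + a) / card A) ^ k) \<partial>measure_pmf (pmf_of_set A))"
    using assms by (simp add: ennreal_mult nn_integral_cmult Suc)
  also have "\<dots> = (\<Sum>x\<in>A. ennreal (if x = i then a else 1) * ennreal (((real (card A) - 1 + a) / card A) ^ k)) / card A"
    using assms by (simp add: nn_integral_pmf_of_set)
  also have "\<dots> = ennreal ((\<Sum>x\<in>A. (if x = i then a else 1)) * (((real (card A) - 1 + a) / card A) ^ k)) / card A"
  proof -
    have "0 \<le> (\<Sum>x\<in>A. (if x = i then a else 1))" using assms by (intro sum_nonneg) auto
    moreover have "0 \<le> ((real (card A) - 1 + a) / card A) ^ k" using c assms by simp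
    ultimately show ?thesis using assms
      by (simp add: ennreal_mult[symmetric] sum_distrib_right[symmetric] sum_ennreal)
  qed
  also have "(\<Sum>x\<in>A. (if x = i then a else 1)) = real (card A) - 1 + a"
  proof -
    have "(\<Sum>x\<in>A. (if x = i then a else 1)) = (\<Sum>x\<in>A. (if x = i then a - 1 else 0) + 1)"
      by (intro sum.cong) auto
    also have "\<dots> = a - 1 + card A" using assms by (simp add: sum.distrib)
    finally show ?thesis by simp
  qed
  also have "ennreal ((real (card A) - 1 + a) * (((real (card A) - 1 + a) / card A) ^ k)) / card A
     = ennreal (((real (card A) - 1 + a) / card A) ^ Suc k)"
  proof -
    have "0 \<le> (real (card A) - 1 + a) * (((real (card A) - 1 + a) / card A) ^ k)" using c assms by simp
    then have "ennreal ((real (card A) - 1 + a) * (((real (card A) - 1 + a) / card A) ^ k)) / card A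
      = ennreal ((real (card A) - 1 + a) * (((real (card A) - 1 + a) / card A) ^ k) / card A)"
      using c by (simp add: divide_ennreal ennreal_of_nat_eq_real_of_nat)
    also have "(real (card A) - 1 + a) * (((real (card A) - 1 + a) / card A) ^ k) / card A
       = ((real (card A) - 1 + a) / card A) ^ Suc k" by simp
    finally show ?thesis .
  qed
  finally show ?case .
qed

lemma binom_exp:
  assumes "0 \<le> p" "p \<le> 1" "0 \<le> C" "0 \<le> m"
  shows "(\<integral>\<^sup>+k. ennreal (C * m ^ k) \<partial>measure_pmf (binomial_pmf S p)) = ennreal (C * (1 - p + p * m) ^ S)"
proof -
  have "(\<integral>\<^sup>+k. ennreal (C * m ^ k) \<partial>measure_pmf (binomial_pmf S p))
     = ennreal (measure_pmf.expectation (binomial_pmf S p) (\<lambda>k. C * m ^ k))"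
    using assms by (intro nn_integral_eq_integral) auto
  also have "measure_pmf.expectation (binomial_pmf S p) (\<lambda>k. C * m ^ k)
     = (\<Sum>k\<le>S. real (S choose k) * p ^ k * (1 - p) ^ (S - k) * (C * m ^ k))"
    using assms by (subst expectation_binomial_pmf') auto
  also have "\<dots> = C * (\<Sum>k\<le>S. real (S choose k) * (p * m) ^ k * (1 - p) ^ (S - k))"
    by (simp add: sum_distrib_left power_mult_distrib mult_ac)
  also have "\<dots> = C * (1 - p + p * m) ^ S"
    using binomial_ring[of "p * m" "1 - p" S] by (simp add: add.commute)
  finally show ?thesis .
qed

lemma ind_le:
  assumes "finite A" "A \<noteq> {}"
  shows "(indicator {m. m < T} (Min (f ` A)) :: ennreal) \<le> ennreal (\<Sum>i\<in>A. 2 ^ T * (1/2) ^ (f i))"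
proof (cases "Min (f ` A) < T")
  case True
  have "Min (f ` A) \<in> f ` A" using assms by (intro Min_in) auto
  then obtain i where i: "i \<in> A" "f i = Min (f ` A)" by (metis imageE)
  have "(1::real) \<le> 2 ^ T * (1/2) ^ (f i)"
  proof -
    have "(2::real) ^ T = 2 ^ (f i) * 2 ^ (T - f i)" using True i
      by (simp add: power_add[symmetric])
    moreover have "(1::real) \<le> 2 ^ (T - f i)" by simp
    ultimately show ?thesis by (simp add: power_one_over)
  qed
  also have "\<dots> \<le> (\<Sum>i\<in>A. 2 ^ T * (1/2) ^ (f i))"
    using assms i by (intro member_le_sum) auto
  finally show ?thesis using True by simp
qed simp

lemma tail_bound:
  assumes "0 < \<gamma>" "\<gamma> \<le> 1" "1 \<le> b"
  shows "measure_pmf.prob (mU_pmf \<gamma> b d S) {m. m < T}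
     \<le> real (b ^ (d - 1)) * 2 ^ T * (1 - \<gamma> ^ (d - 1) / (2 * real (b ^ (d - 1)))) ^ S"
proof -
  define n where "n = b ^ (d - 1)"
  define p where "p = \<gamma> ^ (d - 1)"
  define A where "A = {1..n}"
  define m where "m = (real (card A) - 1 + 1/2) / card A"
  have n1: "1 \<le> n" unfolding n_def using assms by simp
  have A: "finite A" "A \<noteq> {}" "card A = n" unfolding A_def using n1 by auto
  have p: "0 \<le> p" "p \<le> 1" unfolding p_def using assms by (auto intro: power_le_one)
  have m0: "0 \<le> m" unfolding m_def using A n1 by simp
  have inner: "(\<integral>\<^sup>+xs. ennreal (\<Sum>i\<in>A. 2 ^ T * (1/2) ^ count_list xs i)
       \<partial>measure_pmf (replicate_pmf k (pmf_of_set A))) = ennreal (real n * 2 ^ T * m ^ k)" for k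
  proof -
    have "(\<integral>\<^sup>+xs. ennreal (\<Sum>i\<in>A. 2 ^ T * (1/2) ^ count_list xs i)
       \<partial>measure_pmf (replicate_pmf k (pmf_of_set A)))
      = (\<integral>\<^sup>+xs. (\<Sum>i\<in>A. ennreal (2 ^ T) * ennreal ((1/2) ^ count_list xs i))
       \<partial>measure_pmf (replicate_pmf k (pmf_of_set A)))"
      by (simp add: sum_ennreal[symmetric] ennreal_mult)
    also have "\<dots> = (\<Sum>i\<in>A. ennreal (2 ^ T) * (\<integral>\<^sup>+xs. ennreal ((1/2) ^ count_list xs i)
       \<partial>measure_pmf (replicate_pmf k (pmf_of_set A))))"
      by (simp add: nn_integral_sum nn_integral_cmult)
    also have "\<dots> = (\<Sum>i\<in>A. ennreal (2 ^ T) * ennreal (m ^ k))"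
      using A by (intro sum.cong refl) (simp add: rep_count m_def)
    also have "\<dots> = ennreal (real n * 2 ^ T * m ^ k)"
    proof -
      have "(\<Sum>i\<in>A. ennreal (2 ^ T) * ennreal (m ^ k)) = of_nat n * ennreal (2 ^ T * m ^ k)"
        using A m0 by (simp add: ennreal_mult[symmetric])
      also have "\<dots> = ennreal (real n) * ennreal (2 ^ T * m ^ k)"
        by (simp add: ennreal_of_nat_eq_real_of_nat)
      also have "\<dots> = ennreal (real n * (2 ^ T * m ^ k))"
        using m0 by (simp add: ennreal_mult)
      finally show ?thesis by (simp add: mult.assoc)
    qed
    finally show ?thesis .
  qed
  have "emeasure (measure_pmf (mU_pmf \<gamma> b d S)) {m. m < T}
      = (\<integral>\<^sup>+k. \<integral>\<^sup>+xs. indicator {m. m < T} (Min ((\<lambda>i. count_list xs i) ` A))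
          \<partial>measure_pmf (replicate_pmf k (pmf_of_set A)) \<partial>measure_pmf (binomial_pmf S p))"
    unfolding mU_pmf_def A_def n_def p_def
    by (simp flip: nn_integral_indicator)
  also have "\<dots> \<le> (\<integral>\<^sup>+k. \<integral>\<^sup>+xs. ennreal (\<Sum>i\<in>A. 2 ^ T * (1/2) ^ count_list xs i)
          \<partial>measure_pmf (replicate_pmf k (pmf_of_set A)) \<partial>measure_pmf (binomial_pmf S p))"
    using A by (intro nn_integral_mono ind_le) auto
  also have "\<dots> = (\<integral>\<^sup>+k. ennreal (real n * 2 ^ T * m ^ k) \<partial>measure_pmf (binomial_pmf S p))"
    by (simp add: inner)
  also have "\<dots> = ennreal (real n * 2 ^ T * (1 - p + p * m) ^ S)"
    using p m0 by (intro binom_exp) auto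
  also have "1 - p + p * m = 1 - p / (2 * real n)"
    unfolding m_def using A n1 by (simp add: field_simps)
  finally have "emeasure (measure_pmf (mU_pmf \<gamma> b d S)) {m. m < T} \<le> ennreal (real n * 2 ^ T * (1 - p / (2 * real n)) ^ S)" .
  moreover have "0 \<le> 1 - p / (2 * real n)" using p n1 by (simp add: field_simps)
  ultimately show ?thesis unfolding n_def p_def
    by (simp add: measure_pmf.emeasure_eq_measure)
qed

lemma numeric:
  fixes \<delta> N P T S :: real
  assumes "0 < \<delta>" "1 \<le> N" "0 < P" "P \<le> 1" "1 \<le> T"
    and "T \<ge> 4 * ln (1 / \<delta>) + 4 * ln 2"
    and "S \<ge> 16 * (1 / P) * ln (2 * N) * N * T - 1"
  shows "N * 2 powr T * exp (- (S * (P / (2 * N)))) \<le> \<delta>"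
proof -
  define l where "l = ln (2::real)"
  have l: "2/3 \<le> l" unfolding l_def by (rule ln2_ge_two_thirds)
  have lnN: "0 \<le> ln N" using assms by simp
  have L: "ln (2 * N) = l + ln N" unfolding l_def using assms by (simp add: ln_mult)
  have x: "P / (2 * N) \<le> 1/2" using assms by (simp add: field_simps)
  have xp: "0 < P / (2 * N)" using assms by simp
  have "S * (P / (2 * N)) \<ge> (16 * (1 / P) * ln (2 * N) * N * T - 1) * (P / (2 * N))"
    using assms(7) xp by (intro mult_right_mono) auto
  also have "(16 * (1 / P) * ln (2 * N) * N * T - 1) * (P / (2 * N)) = 8 * ln (2 * N) * T - P / (2 * N)"
    using assms by (simp add: field_simps)
  finally have "S * (P / (2 * N)) \<ge> 8 * ln (2 * N) * T - 1/2" using x by linarith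
  then have Sx: "S * (P / (2 * N)) \<ge> 8 * (l + ln N) * T - 1/2" using L by simp
  have ld: "ln \<delta> \<ge> l - T / 4" using assms(1,6) unfolding l_def by (simp add: ln_div)
  have key: "ln N + T * l - S * (P / (2 * N)) \<le> ln \<delta>"
  proof -
    have "ln N * (1 - 8 * T) \<le> 0" using lnN assms(5) by (intro mult_nonneg_nonpos) auto
    then have a: "ln N \<le> 8 * (T * ln N)" by (simp add: algebra_simps)
    have b: "T * l \<ge> 2/3 * T" using l assms(5) by (simp add: mult.commute mult_right_mono)
    have c: "S * (P / (2 * N)) \<ge> 8 * (T * l) + 8 * (T * ln N) - 1/2" using Sx by (simp add: algebra_simps)
    show ?thesis using a b c ld l assms(5) by linarith
  qed
  have "N * 2 powr T * exp (- (S * (P / (2 * N)))) = exp (ln N + T * l - S * (P / (2 * N)))"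
  proof -
    have "exp (ln N + T * l - S * (P / (2 * N))) = exp (ln N) * exp (T * l) * exp (- (S * (P / (2 * N))))"
      by (simp only: diff_conv_add_uminus exp_add)
    moreover have "exp (ln N) = N" using assms by simp
    moreover have "exp (T * l) = 2 powr T" unfolding l_def powr_def by simp
    ultimately show ?thesis by simp
  qed
  also have "\<dots> \<le> exp (ln \<delta>)" using key by simp
  also have "\<dots> = \<delta>" using assms by simp
  finally show ?thesis .
qed

theorem lemma6:
  fixes \<delta> \<gamma> :: real and b d T :: nat
  assumes "0 < \<delta>" "\<delta> < 1" "0 < \<gamma>" "\<gamma> < 1" "1 \<le> b" "1 \<le> d"
    and "real T \<ge> 4 * ln (1 / \<delta>) + 4 * ln 2"
  shows "(\<exists>S. prob_mU_ge \<gamma> b d T S \<ge> 1 - \<delta>) \<and>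
    real (t_iter \<delta> \<gamma> b d T)
      \<le> 16 * (1 / \<gamma>) ^ (d - 1) * ln (2 * real b ^ (d - 1)) * real b ^ (d - 1) * real T"
proof -
  define N where "N = real (b ^ (d - 1))"
  define P where "P = \<gamma> ^ (d - 1)"
  define B where "B = 16 * (1 / \<gamma>) ^ (d - 1) * ln (2 * real b ^ (d - 1)) * real b ^ (d - 1) * real T"
  define S where "S = nat \<lfloor>B\<rfloor>"
  have N1: "1 \<le> N" unfolding N_def using assms by simp
  have P: "0 < P" "P \<le> 1" unfolding P_def using assms by (auto intro: power_le_one)
  have l2: "0 < ln (2::real)" by simp
  have T1: "1 \<le> real T"
  proof -
    have "0 < ln (1 / \<delta>)" using assms by simp
    then have "0 < real T" using assms(7) l2 by linarith
    then show ?thesis by simp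
  qed
  have B_eq: "B = 16 * (1 / P) * ln (2 * N) * N * real T"
    unfolding B_def N_def P_def by (simp add: power_one_over)
  have B0: "0 \<le> B" unfolding B_eq using N1 P T1 by simp
  have SB: "real S \<le> B" "real S \<ge> B - 1" unfolding S_def using B0 by linarith+
  have tail: "measure_pmf.prob (mU_pmf \<gamma> b d S) {m. m < T} \<le> N * 2 ^ T * (1 - P / (2 * N)) ^ S"
    unfolding N_def P_def using tail_bound[of \<gamma> b d S T] assms by simp
  have x: "0 \<le> 1 - P / (2 * N)" using P N1 by (simp add: field_simps)
  have "(1 - P / (2 * N)) ^ S \<le> exp (- (P / (2 * N))) ^ S"
    using x by (intro power_mono) (auto simp: exp_ge_add_one_self[of "- (P / (2 * N))", simplified])
  also have "\<dots> = exp (- (real S * (P / (2 * N))))" by (simp add: exp_of_nat_mult[symmetric])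
  finally have "N * 2 ^ T * (1 - P / (2 * N)) ^ S \<le> N * 2 powr real T * exp (- (real S * (P / (2 * N))))"
    using N1 by (simp add: powr_realpow)
  also have "\<dots> \<le> \<delta>"
    using numeric[of \<delta> N P "real T" "real S"] assms N1 P T1 SB B_eq by simp
  finally have tl: "measure_pmf.prob (mU_pmf \<gamma> b d S) {m. m < T} \<le> \<delta>" using tail by linarith
  have "prob_mU_ge \<gamma> b d T S = 1 - measure_pmf.prob (mU_pmf \<gamma> b d S) {m. m < T}"
  proof -
    have "{m. T \<le> m} = UNIV - {m. m < T}" by auto
    then show ?thesis unfolding prob_mU_ge_def using measure_pmf.prob_compl[where M="mU_pmf \<gamma> b d S" and A="{m. m < T}"] by simp
  qed
  then have good: "prob_mU_ge \<gamma> b d T S \<ge> 1 - \<delta>" using tl by simp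
  have "t_iter \<delta> \<gamma> b d T \<le> S" unfolding t_iter_def using good by (rule Least_le)
  then have "real (t_iter \<delta> \<gamma> b d T) \<le> B" using SB by linarith
  then show ?thesis using good unfolding B_def by blast
qed

end
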